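(* Let $\mathcal{P}(\mathbb{R}^d)$ denote the set of probability measures on $\mathbb{R}^d$ that are absolutely continuous with respect to Lebesgue measure and admit smooth densities. Let $p=\tilde p/\mathcal{Z}\in\mathcal{P}(\mathbb{R}^d)$ be a target density with $\tilde p:\mathbb{R}^d\to\mathbb{R}_{\ge0}$ continuous and $\mathcal{Z}=\int\tilde p(x)\,\mathrm{d}x$. Fix $\varepsilon_{\text{tr}}>0$, $\varepsilon_{\text{ent}}>0$ and $q_0\in\mathcal{P}(\mathbb{R}^d)$, and for $i\in\mathbb{N}$ consider the iterative scheme $$q_{i+1}=\operatorname*{arg\,min}_{q\in\mathcal{P}(\mathbb{R}^d)} D_{\mathrm{KL}}(q\,\|\,p)\quad\text{s.t.}\quad D_{\mathrm{KL}}(q\,\|\,q_i)\le\varepsilon_{\text{tr}},\quad H(q_i)-H(q)\le\varepsilon_{\text{ent}}$$ (together with the normalization constraint $\int q(x)\,\mathrm{d}x=1$), treated via a Lagrangian with multipliers $\lambda\ge0$ (trust-region constraint) and $\eta\ge0$ (entropy constraint). Then the intermediate optimal densities solving this problem satisfy $$q_{i+1}(x,\lambda,\eta)=\frac{q_i(x)^{\frac{\lambda}{1+\lambda+\eta}}\,\tilde p(x)^{\frac{1}{1+\lambda+\eta}}}{\mathcal{Z}_{i+1}(\lambda,\eta)},\qquad \mathcal{Z}_{i+1}(\lambda,\eta)=\int q_i(x)^{\frac{\lambda}{1+\lambda+\eta}}\,\tilde p(x)^{\frac{1}{1+\lambda+\eta}}\,\mathrm{d}x,$$ where $q_{i+1}$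 are the unique optima of the Lagrangian corresponding to this problem.
   Context: $D_{\mathrm{KL}}(q\|r)=\int q(x)\log\frac{q(x)}{r(x)}\,\mathrm{d}x$ is the Kullback–Leibler divergence and $H(q)=-\int q(x)\log q(x)\,\mathrm{d}x$ the Shannon entropy. The Lagrangian is $D_{\mathrm{KL}}(q\|p)+\lambda\big(D_{\mathrm{KL}}(q\|q_i)-\varepsilon_{\text{tr}}\big)+\eta\big(H(q_i)-H(q)-\varepsilon_{\text{ent}}\big)$.
   Formalization: $\mathcal{Z}_{i+1}(\lambda,\eta)$ is also assumed finite, minimisers of the Lagrangian range over densities in $\mathcal{P}(\mathbb{R}^d)$ whose divergence and entropy terms are finite, and the closed form is claimed optimal only when it is such a density. Apart from conventions, each condition added here is assumed in the paper as well or is needed for the statement above to hold. *)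

theory Defs
  imports "HOL-Analysis.Analysis"
begin

fun Ck :: "nat \<Rightarrow> ('a::euclidean_space \<Rightarrow> real) \<Rightarrow> bool" where
  "Ck 0 f = continuous_on UNIV f"
| "Ck (Suc k) f = (\<exists>D :: 'a \<Rightarrow> 'a \<Rightarrow> real.
       (\<forall>x. (f has_derivative (\<lambda>h. D h x)) (at x)) \<and> (\<forall>h. Ck k (\<lambda>x. D h x)))"

definition smooth :: "('a::euclidean_space \<Rightarrow> real) \<Rightarrow> bool" where
  "smooth f \<longleftrightarrow> (\<forall>k. Ck k f)"

definition smooth_densities :: "('a::euclidean_space \<Rightarrow> real) set" where
  "smooth_densities = {q. smooth q \<and> (\<forall>x. 0 \<le> q x) \<and>
      integrable lborel q \<and> integral\<^sup>L lborel q = 1}"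

text \<open>KL divergence D_KL(q || r) is finite: q << r (a.e.) and the integrand
  q log (q/r) (with 0 log 0 = 0) is Lebesgue integrable.\<close>
definition KL_finite :: "('a::euclidean_space \<Rightarrow> real) \<Rightarrow> ('a \<Rightarrow> real) \<Rightarrow> bool" where
  "KL_finite q r \<longleftrightarrow> (AE x in lborel. 0 < q x \<longrightarrow> 0 < r x) \<and>
      integrable lborel (\<lambda>x. q x * ln (q x / r x))"

definition KL :: "('a::euclidean_space \<Rightarrow> real) \<Rightarrow> ('a \<Rightarrow> real) \<Rightarrow> real" where
  "KL q r = (\<integral>x. q x * ln (q x / r x) \<partial>lborel)"

definition entropy_finite :: "('a::euclidean_space \<Rightarrow> real) \<Rightarrow> bool" where
  "entropy_finite q \<longleftrightarrow> integrable lborel (\<lambda>x. q x * ln (q x))"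

definition entropy :: "('a::euclidean_space \<Rightarrow> real) \<Rightarrow> real" where
  "entropy q = - (\<integral>x. q x * ln (q x) \<partial>lborel)"

text \<open>Power with the convention 0^0 = 1 (Isabelle's powr has 0 powr 0 = 0).\<close>
definition pw :: "real \<Rightarrow> real \<Rightarrow> real" where
  "pw x a = (if a = 0 then 1 else x powr a)"

definition lagrangian ::
  "('a::euclidean_space \<Rightarrow> real) \<Rightarrow> ('a \<Rightarrow> real) \<Rightarrow> real \<Rightarrow> real \<Rightarrow> real \<Rightarrow> real \<Rightarrow> ('a \<Rightarrow> real) \<Rightarrow> real" where
  "lagrangian p qi eps_tr eps_ent lam eta q =
     KL q p + lam * (KL q qi - eps_tr) + eta * (entropy qi - entropy q - eps_ent)"

definition lagr_domain ::
  "('a::euclidean_space \<Rightarrow> real) \<Rightarrow> ('a \<Rightarrow> real) \<Rightarrow> real \<Rightarrow> real \<Rightarrow> ('a \<Rightarrow> real) set" where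
  "lagr_domain p qi lam eta = {q \<in> smooth_densities. KL_finite q p \<and>
      (lam \<noteq> 0 \<longrightarrow> KL_finite q qi) \<and> (eta \<noteq> 0 \<longrightarrow> entropy_finite q)}"

end

theory Submission
  imports Defs "HOL-Computational_Algebra.Polynomial"
begin

lemma Ck_mono: "Ck (Suc k) f \<Longrightarrow> Ck k f"
proof (induction k arbitrary: f)
  case 0
  then obtain D where D: "\<forall>x. (f has_derivative (\<lambda>h. D h x)) (at x)" by auto
  have "continuous_on UNIV f"
    using D has_derivative_continuous continuous_at_imp_continuous_on by blast
  then show ?case by simp
next
  case (Suc k)
  then obtain D where D: "\<forall>x. (f has_derivative (\<lambda>h. D h x)) (at x)" "\<forall>h. Ck (Suc k) (\<lambda>x. D h x)"
    by auto
  then show ?case using Suc.IH by auto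
qed

lemma Ck_le: "Ck k f \<Longrightarrow> j \<le> k \<Longrightarrow> Ck j f"
proof (induction k)
  case 0 then show ?case by simp
next
  case (Suc k)
  then show ?case using Ck_mono[of k f] by (cases "j = Suc k") auto
qed

lemma Ck_cont: "Ck k f \<Longrightarrow> continuous_on UNIV f"
  using Ck_le[of k f 0] by simp

lemma Ck_const: "Ck k (\<lambda>x. a)"
proof (induction k arbitrary: a)
  case 0 then show ?case by simp
next
  case (Suc k)
  show ?case by (rule Ck.simps(2)[THEN iffD2], rule exI[of _ "\<lambda>h x. 0"]) (auto simp: Suc)
qed

lemma Ck_add: "Ck k f \<Longrightarrow> Ck k g \<Longrightarrow> Ck k (\<lambda>x. f x + g x)"
proof (induction k arbitrary: f g)
  case 0 then show ?case by (auto intro: continuous_intros)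
next
  case (Suc k)
  from Suc.prems obtain D where D: "\<forall>x. (f has_derivative (\<lambda>h. D h x)) (at x)" "\<forall>h. Ck k (\<lambda>x. D h x)" by auto
  from Suc.prems obtain E where E: "\<forall>x. (g has_derivative (\<lambda>h. E h x)) (at x)" "\<forall>h. Ck k (\<lambda>x. E h x)" by auto
  show ?case
    by (rule Ck.simps(2)[THEN iffD2], rule exI[of _ "\<lambda>h x. D h x + E h x"])
       (use D E Suc.IH in \<open>auto intro: has_derivative_add\<close>)
qed

lemma Ck_mult: "Ck k f \<Longrightarrow> Ck k g \<Longrightarrow> Ck k (\<lambda>x. f x * g x)"
proof (induction k arbitrary: f g)
  case 0 then show ?case by (auto intro: continuous_intros)
next
  case (Suc k)
  from Suc.prems obtain D where D: "\<forall>x. (f has_derivative (\<lambda>h. D h x)) (at x)" "\<forall>h. Ck k (\<lambda>x. D h x)" by auto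
  from Suc.prems obtain E where E: "\<forall>x. (g has_derivative (\<lambda>h. E h x)) (at x)" "\<forall>h. Ck k (\<lambda>x. E h x)" by auto
  have fk: "Ck k f" "Ck k g" using Suc.prems Ck_mono by blast+
  show ?case
  proof (rule Ck.simps(2)[THEN iffD2], rule exI[of _ "\<lambda>h x. f x * E h x + D h x * g x"], intro conjI allI)
    fix x show "((\<lambda>x. f x * g x) has_derivative (\<lambda>h. f x * E h x + D h x * g x)) (at x)"
      using has_derivative_mult[OF D(1)[rule_format, of x] E(1)[rule_format, of x]] by simp
  next
    fix h show "Ck k (\<lambda>x. f x * E h x + D h x * g x)"
      using Suc.IH fk D E Ck_add by blast
  qed
qed

lemma Ck_cmult: "Ck k f \<Longrightarrow> Ck k (\<lambda>x. a * f x)"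
  using Ck_mult[OF Ck_const] by blast

lemma Ck_comp:
  fixes \<Phi> :: "nat \<Rightarrow> real \<Rightarrow> real"
  assumes der: "\<And>n s. (\<Phi> n has_real_derivative \<Phi> (Suc n) s) (at s)"
  shows "Ck k f \<Longrightarrow> Ck k (\<lambda>x. \<Phi> n (f x))"
proof (induction k arbitrary: f n)
  case 0
  have "continuous_on UNIV (\<Phi> n)"
    using der DERIV_continuous continuous_at_imp_continuous_on by blast
  then show ?case using 0 by (auto intro: continuous_on_compose2[of UNIV "\<Phi> n" UNIV f])
next
  case (Suc k)
  from Suc.prems obtain D where D: "\<forall>x. (f has_derivative (\<lambda>h. D h x)) (at x)" "\<forall>h. Ck k (\<lambda>x. D h x)" by auto
  have fk: "Ck k f" using Suc.prems Ck_mono by blast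
  show ?case
  proof (rule Ck.simps(2)[THEN iffD2], rule exI[of _ "\<lambda>h x. \<Phi> (Suc n) (f x) * D h x"], intro conjI allI)
    fix x
    have "((\<lambda>x. \<Phi> n (f x)) has_derivative (\<lambda>h. \<Phi> (Suc n) (f x) * D h x)) (at x)"
      using has_derivative_compose[OF D(1)[rule_format, of x] der[of n "f x", unfolded has_field_derivative_def]]
      by (simp add: o_def)
    then show "((\<lambda>x. \<Phi> n (f x)) has_derivative (\<lambda>h. \<Phi> (Suc n) (f x) * D h x)) (at x)" .
  next
    fix h show "Ck k (\<lambda>x. \<Phi> (Suc n) (f x) * D h x)"
      using Suc.IH[OF fk] D Ck_mult by blast
  qed
qed

lemma Ck_inner: "Ck k (\<lambda>x. inner x (v::'a::euclidean_space))"
proof (induction k)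
  case 0 then show ?case by (auto intro: continuous_intros)
next
  case (Suc k)
  show ?case
    by (rule Ck.simps(2)[THEN iffD2], rule exI[of _ "\<lambda>h x. inner h v"])
       (auto intro!: derivative_eq_intros simp: Ck_const)
qed

lemma Ck_sq_Suc: "Ck (Suc j) (\<lambda>x. R - inner (x - a) (x - (a::'a::euclidean_space)))"
proof -
  have *: "Ck j (\<lambda>x. - (2 * inner x h) + 2 * inner a h)" for h
    by (intro Ck_add Ck_const) (use Ck_cmult[OF Ck_inner, of j "-2" h] in simp)
  show ?thesis
    apply (rule Ck.simps(2)[THEN iffD2], rule exI[of _ "\<lambda>h x. - (2 * inner x h) + 2 * inner a h"])
    apply (intro conjI allI)
     apply (rule derivative_eq_intros refl)+
     apply (simp add: inner_diff_left inner_diff_right inner_commute)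
    using * by simp
qed

lemma Ck_sq: "Ck k (\<lambda>x. R - inner (x - a) (x - (a::'a::euclidean_space)))"
  using Ck_mono[OF Ck_sq_Suc] .

fun Pb :: "nat \<Rightarrow> real poly" where
  "Pb 0 = 1"
| "Pb (Suc n) = [:0,0,1:] * (Pb n - pderiv (Pb n))"

definition bphi :: "nat \<Rightarrow> real \<Rightarrow> real" where
  "bphi n s = (if s > 0 then poly (Pb n) (1/s) * exp (-1/s) else 0)"

lemma poly_exp_lim: "((\<lambda>u. poly Q u / exp u) \<longlongrightarrow> (0::real)) at_top"
proof -
  have "((\<lambda>u. \<Sum>i\<le>degree Q. coeff Q i * (u ^ i / exp u)) \<longlongrightarrow> (0::real)) at_top"
    by (intro tendsto_null_sum tendsto_mult_right_zero tendsto_power_div_exp_0)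
  moreover have "(\<Sum>i\<le>degree Q. coeff Q i * (u ^ i / exp u)) = poly Q u / exp u" for u
    by (simp add: poly_altdef sum_divide_distrib)
  ultimately show ?thesis by simp
qed

lemma bphi_deriv_pos:
  assumes "s > 0"
  shows "(bphi n has_real_derivative bphi (Suc n) s) (at s)"
proof -
  have d: "((\<lambda>s. poly (Pb n) (1/s) * exp (-1/s)) has_real_derivative
      (poly (pderiv (Pb n)) (1/s) * (- 1 / s^2) * exp (-1/s) + poly (Pb n) (1/s) * (exp (-1/s) * (1/s^2)))) (at s)"
    using assms
    by (auto intro!: derivative_eq_intros DERIV_chain2[OF poly_DERIV] simp: power2_eq_square field_simps)
  have eq: "poly (pderiv (Pb n)) (1/s) * (- 1 / s^2) * exp (-1/s) + poly (Pb n) (1/s) * (exp (-1/s) * (1/s^2))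
      = bphi (Suc n) s"
    using assms by (simp add: bphi_def algebra_simps power2_eq_square)
  have ev: "\<forall>\<^sub>F y in nhds s. poly (Pb n) (1/y) * exp (-1/y) = bphi n y"
    using eventually_nhds_in_open[of "{0<..}" s] assms
    by (auto elim!: eventually_mono simp: bphi_def)
  show ?thesis
    using DERIV_cong_ev[OF refl ev refl] d eq by simp
qed

lemma bphi_deriv_neg:
  assumes "s < 0"
  shows "(bphi n has_real_derivative bphi (Suc n) s) (at s)"
proof -
  have ev: "\<forall>\<^sub>F y in nhds s. 0 = bphi n y"
    using eventually_nhds_in_open[of "{..<0}" s] assms
    by (auto elim!: eventually_mono simp: bphi_def)
  have "((\<lambda>_. 0) has_real_derivative 0) (at s)" by simp
  then have "(bphi n has_real_derivative 0) (at s)"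
    using DERIV_cong_ev[OF refl ev refl] by simp
  moreover have "bphi (Suc n) s = 0" using assms by (simp add: bphi_def)
  ultimately show ?thesis by simp
qed

lemma bphi_deriv_0:
  "(bphi n has_real_derivative bphi (Suc n) 0) (at 0)"
proof -
  have r: "((\<lambda>y. bphi n y / y) \<longlongrightarrow> 0) (at_right 0)"
  proof -
    have lim: "((\<lambda>u. poly (pCons 0 (Pb n)) u / exp u) \<longlongrightarrow> (0::real)) at_top"
      by (rule poly_exp_lim)
    have L: "((\<lambda>y. poly (pCons 0 (Pb n)) (inverse y) / exp (inverse y)) \<longlongrightarrow> (0::real)) (at_right 0)"
      by (rule filterlim_compose[OF lim filterlim_inverse_at_top_right])
    have E: "\<forall>\<^sub>F y in at_right 0. poly (pCons 0 (Pb n)) (inverse y) / exp (inverse y) = bphi n y / y"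
      using eventually_at_right_less[of "0::real"]
    proof (rule eventually_mono)
      fix y :: real assume "0 < y"
      then show "poly (pCons 0 (Pb n)) (inverse y) / exp (inverse y) = bphi n y / y"
      proof -
        have "poly (pCons 0 (Pb n)) (inverse y) = inverse y * poly (Pb n) (inverse y)" by simp
        moreover have "exp (inverse y) = inverse (exp (- inverse y))" by (simp add: exp_minus)
        moreover have "bphi n y = poly (Pb n) (inverse y) * exp (- inverse y)"
          using \<open>0 < y\<close> by (simp add: bphi_def inverse_eq_divide)
        ultimately show ?thesis by (simp add: divide_inverse mult_ac)
      qed
    qed
    show ?thesis using tendsto_cong[OF E] L by simp
  qed
  have l: "((\<lambda>y. bphi n y / y) \<longlongrightarrow> 0) (at_left 0)"
  proof -
    have "\<forall>\<^sub>F y in at_left (0::real). 0 = bphi n y / y"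
      using eventually_at_filter[of "\<lambda>y. y < (0::real)" 0 "{..<0}"]
      by (auto simp: bphi_def eventually_at_filter)
    then have "((\<lambda>_. 0) \<longlongrightarrow> (0::real)) (at_left (0::real)) = ((\<lambda>y. bphi n y / y) \<longlongrightarrow> 0) (at_left 0)"
      by (rule tendsto_cong)
    then show ?thesis by simp
  qed
  have "((\<lambda>y. (bphi n y - bphi n 0) / (y - 0)) \<longlongrightarrow> 0) (at 0)"
  proof -
    have "((\<lambda>y. bphi n y / y) \<longlongrightarrow> 0) (at 0)"
      using filterlim_at_split[of "\<lambda>y. bphi n y / y" "nhds 0" 0] r l by simp
    then show ?thesis by (simp add: bphi_def)
  qed
  then have "(bphi n has_real_derivative 0) (at 0)"
    using has_field_derivative_iff by blast
  then show ?thesis by (simp add: bphi_def)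
qed

lemma bphi_deriv: "(bphi n has_real_derivative bphi (Suc n) s) (at s)"
  using bphi_deriv_pos bphi_deriv_neg bphi_deriv_0 by (cases "s > 0"; cases "s < 0") auto

lemma cont_meas: "continuous_on UNIV (f::'a::euclidean_space \<Rightarrow> real) \<Longrightarrow> f \<in> borel_measurable lborel"
  using borel_measurable_continuous_onI by (simp add: measurable_lborel1)

lemma not_AE_ball:
  assumes "0 < \<rho>"
  shows "\<not> (AE x in lborel. x \<notin> ball (x0::'a::euclidean_space) \<rho>)"
proof
  assume "AE x in lborel. x \<notin> ball x0 \<rho>"
  then have "emeasure lborel (ball x0 \<rho>) = 0"
    by (subst (asm) AE_iff_measurable[of "ball x0 \<rho>"]) auto
  then have "Henstock_Kurzweil_Integration.content (ball x0 \<rho>) = 0" by (simp add: measure_def)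
  with content_ball_pos[OF assms, of x0] show False by simp
qed

lemma integral_pos_ball:
  fixes h :: "'a::euclidean_space \<Rightarrow> real"
  assumes "integrable lborel h" "\<And>x. 0 \<le> h x" "0 < \<rho>" "\<And>x. x \<in> ball x0 \<rho> \<Longrightarrow> 0 < h x"
  shows "0 < integral\<^sup>L lborel h"
proof -
  have "integral\<^sup>L lborel h \<noteq> 0"
  proof
    assume "integral\<^sup>L lborel h = 0"
    then have "AE x in lborel. h x = 0"
      using integral_nonneg_eq_0_iff_AE[OF assms(1)] assms(2) by auto
    then have "AE x in lborel. x \<notin> ball x0 \<rho>"
      by (rule AE_mp) (use assms(4) in force)
    with not_AE_ball[OF assms(3)] show False by blast
  qed
  moreover have "0 \<le> integral\<^sup>L lborel h" using assms(2) by simp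
  ultimately show ?thesis by simp
qed

lemma integrable_bounded_cball:
  fixes h :: "'a::euclidean_space \<Rightarrow> real"
  assumes "h \<in> borel_measurable lborel" "\<And>x. \<bar>h x\<bar> \<le> B * indicator (cball x0 \<rho>) x"
  shows "integrable lborel h"
proof (rule Bochner_Integration.integrable_bound[OF _ assms(1)])
  show "integrable lborel (\<lambda>x. B * indicator (cball x0 \<rho>) x :: real)"
    using emeasure_lborel_cball_finite by (intro integrable_mult_right integrable_real_indicator) auto
  show "AE x in lborel. norm (h x) \<le> norm (B * indicator (cball x0 \<rho>) x :: real)"
    using assms(2) by (auto intro!: AE_I2 order_trans[OF _ abs_ge_self])
qed

lemma cont_ball:
  fixes f :: "'a::euclidean_space \<Rightarrow> real"
  assumes "continuous_on UNIV f" "0 < e"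
  shows "\<exists>d>0. \<forall>y\<in>ball x d. \<bar>f y - f x\<bar> < e"
proof -
  obtain d where d: "d > 0" "\<forall>x'. dist x' x < d \<longrightarrow> dist (f x') (f x) < e"
    using assms unfolding continuous_on_iff by blast
  show ?thesis
    by (rule exI[of _ d]) (use d in \<open>auto simp: dist_real_def mem_ball dist_commute[of x]\<close>)
qed

definition bump :: "'a::euclidean_space \<Rightarrow> real \<Rightarrow> 'a \<Rightarrow> real" where
  "bump a \<rho> x = bphi 0 (\<rho>^2 - inner (x - a) (x - a))"

lemma bump_smooth: "smooth (bump a \<rho>)"
  unfolding smooth_def bump_def
proof
  fix k show "Ck k (\<lambda>x. bphi 0 (\<rho>^2 - inner (x - a) (x - a)))"
    by (rule Ck_comp[where \<Phi>=bphi and f="\<lambda>x. \<rho>^2 - inner (x - a) (x - a)", OF bphi_deriv Ck_sq])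
qed

lemma bump_nonneg: "0 \<le> bump a \<rho> x"
  by (simp add: bump_def bphi_def)

lemma bump_le1: "bump a \<rho> x \<le> 1"
  by (simp add: bump_def bphi_def)

lemma bump_pos: "0 < \<rho> \<Longrightarrow> 0 < bump a \<rho> x \<longleftrightarrow> x \<in> ball a \<rho>"
proof -
  assume "0 < \<rho>"
  have "inner (x - a) (x - a) = (dist a x)^2"
    by (metis dist_commute dist_norm power2_norm_eq_inner)
  then have "(0 < \<rho>^2 - inner (x - a) (x - a)) \<longleftrightarrow> dist a x < \<rho>"
  proof -
    have "(dist a x)^2 < \<rho>^2 \<longleftrightarrow> dist a x < \<rho>"
      using \<open>0 < \<rho>\<close> power_strict_mono[of "dist a x" \<rho> 2] power_less_imp_less_base[of "dist a x" 2 \<rho>]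
      by auto
    then show ?thesis using \<open>inner (x - a) (x - a) = (dist a x)^2\<close> by simp
  qed
  then show ?thesis by (simp add: bump_def bphi_def)
qed

lemma bump_cont: "continuous_on UNIV (bump a \<rho>)"
  using bump_smooth Ck_cont unfolding smooth_def by blast

lemma smooth_dens_D:
  assumes "q \<in> smooth_densities"
  shows "continuous_on UNIV q" "\<And>x. 0 \<le> q x" "integrable lborel q" "integral\<^sup>L lborel q = 1" "smooth q"
  using assms Ck_cont[of 0 q] unfolding smooth_densities_def smooth_def by auto

lemma pw_cont:
  assumes "continuous_on UNIV f" "\<And>x. 0 \<le> f x" "0 \<le> a"
  shows "continuous_on UNIV (\<lambda>x. pw (f x) a)"
proof (cases "a = 0")
  case True then show ?thesis by (simp add: pw_def)
next
  case False
  then have "continuous_on UNIV (\<lambda>x. f x powr a)"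
    using assms by (intro continuous_on_powr') (auto intro: continuous_intros)
  then show ?thesis using False by (simp add: pw_def)
qed

locale ctx =
  fixes pt qi p r :: "'a::euclidean_space \<Rightarrow> real" and Z lam eta c :: real
  assumes Z_pos: "0 < Z" and p_eq: "\<And>x. p x = pt x / Z"
    and pdens: "p \<in> smooth_densities" and qidens: "qi \<in> smooth_densities"
    and lam: "0 \<le> lam" and eta: "0 \<le> eta" and c_def: "c = 1 + lam + eta"
    and r_def: "\<And>x. r x = pw (qi x) (lam / c) * pw (pt x) (1 / c)"
begin

lemma pt_eq: "pt x = Z * p x"
  using p_eq[of x] Z_pos by simp

lemma c_pos: "0 < c" and c_ge1: "1 \<le> c"
  using lam eta c_def by auto

lemma p_nonneg: "0 \<le> p x" and qi_nonneg: "0 \<le> qi x" and pt_nonneg: "0 \<le> pt x"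
  using smooth_dens_D(2)[OF pdens] smooth_dens_D(2)[OF qidens] pt_eq Z_pos by auto

lemma p_cont: "continuous_on UNIV p" and qi_cont: "continuous_on UNIV qi"
  using smooth_dens_D(1)[OF pdens] smooth_dens_D(1)[OF qidens] by auto

lemma pt_cont: "continuous_on UNIV pt"
proof -
  have "continuous_on UNIV (\<lambda>x. Z * p x)" using p_cont by (intro continuous_intros)
  then show ?thesis using pt_eq by (simp add: fun_eq_iff)
qed

lemma r_cont: "continuous_on UNIV r"
proof -
  have "continuous_on UNIV (\<lambda>x. pw (qi x) (lam / c) * pw (pt x) (1 / c))"
    using lam c_pos qi_cont pt_cont qi_nonneg pt_nonneg
    by (intro continuous_intros pw_cont) auto
  then show ?thesis using r_def by (simp add: fun_eq_iff)
qed

lemma meas[measurable]: "p \<in> borel_measurable lborel" "qi \<in> borel_measurable lborel"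
   "pt \<in> borel_measurable lborel" "r \<in> borel_measurable lborel"
  using cont_meas p_cont qi_cont pt_cont r_cont by auto

lemma pw_nonneg: "0 \<le> x \<Longrightarrow> 0 \<le> pw x a"
  by (simp add: pw_def)

lemma r_nonneg: "0 \<le> r x"
  using r_def pw_nonneg qi_nonneg pt_nonneg by simp

lemma r_pos: "0 < p x \<Longrightarrow> (lam \<noteq> 0 \<Longrightarrow> 0 < qi x) \<Longrightarrow> 0 < r x"
  using Z_pos by (cases "lam = 0") (auto simp: r_def pw_def pt_eq c_pos)

lemma r_pos_D: "0 < r x \<Longrightarrow> 0 < p x \<and> (lam \<noteq> 0 \<longrightarrow> 0 < qi x)"
proof -
  assume "0 < r x"
  moreover have "pt x = 0 \<Longrightarrow> r x = 0" using c_pos by (simp add: r_def pw_def)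
  moreover have "lam \<noteq> 0 \<Longrightarrow> qi x = 0 \<Longrightarrow> r x = 0" using c_pos by (simp add: r_def pw_def)
  ultimately show ?thesis using pt_eq[of x] p_nonneg[of x] qi_nonneg[of x] Z_pos
    by (auto simp: order_le_less)
qed

lemma ln_r:
  assumes "0 < p x" "lam \<noteq> 0 \<Longrightarrow> 0 < qi x"
  shows "c * ln (r x) = lam * ln (qi x) + ln Z + ln (p x)"
proof (cases "lam = 0")
  case True
  have "r x = pt x powr (1/c)" using True c_pos by (simp add: r_def pw_def)
  then have "c * ln (r x) = ln (pt x)" using c_pos assms Z_pos by (simp add: ln_powr pt_eq)
  then show ?thesis using True assms Z_pos by (simp add: pt_eq ln_mult)
next
  case False
  then have q: "0 < qi x" using assms by auto
  have "r x = qi x powr (lam/c) * pt x powr (1/c)" using False c_pos by (simp add: r_def pw_def)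
  then have "ln (r x) = (lam/c) * ln (qi x) + (1/c) * ln (pt x)"
    using q assms Z_pos by (simp add: ln_mult ln_powr pt_eq)
  then have "c * ln (r x) = lam * ln (qi x) + ln (pt x)" using c_pos by (simp add: field_simps)
  then show ?thesis using assms Z_pos by (simp add: pt_eq ln_mult)
qed

definition "Dm = lagr_domain p qi lam eta"

definition "A q = (\<integral>x. q x * ln (q x / r x) \<partial>lborel)"

lemma Dm_D:
  assumes "q \<in> Dm"
  shows "continuous_on UNIV q" "\<And>x. 0 \<le> q x" "integrable lborel q" "integral\<^sup>L lborel q = 1" "smooth q"
    "KL_finite q p" "lam \<noteq> 0 \<Longrightarrow> KL_finite q qi" "eta \<noteq> 0 \<Longrightarrow> entropy_finite q"
  using assms smooth_dens_D[of q] unfolding Dm_def lagr_domain_def by auto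

lemma Dm_AE:
  assumes "q \<in> Dm"
  shows "AE x in lborel. 0 < q x \<longrightarrow> 0 < r x"
proof -
  have 1: "AE x in lborel. 0 < q x \<longrightarrow> 0 < p x" using Dm_D(6)[OF assms] by (simp add: KL_finite_def)
  have 2: "AE x in lborel. lam \<noteq> 0 \<longrightarrow> 0 < q x \<longrightarrow> 0 < qi x"
  proof (cases "lam = 0")
    case False then show ?thesis using Dm_D(7)[OF assms] by (simp add: KL_finite_def)
  qed simp
  show ?thesis using 1 2 by eventually_elim (auto intro: r_pos)
qed

lemma pointwise_id:
  assumes "0 \<le> q" "0 < q \<Longrightarrow> 0 < r x"
  shows "q * ln (q / p x) + lam * (q * ln (q / qi x)) + eta * (q * ln q)
       = c * (q * ln (q / r x)) + q * ln Z"
proof (cases "q = 0")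
  case True then show ?thesis by simp
next
  case False
  then have q: "0 < q" using assms by simp
  then have rp: "0 < r x" using assms by simp
  note pq = r_pos_D[OF rp]
  have e1: "ln (q / p x) = ln q - ln (p x)" using q pq by (simp add: ln_div)
  have e3: "ln (q / r x) = ln q - ln (r x)" using q rp by (simp add: ln_div)
  have cr: "c * ln (r x) = lam * ln (qi x) + ln Z + ln (p x)" using ln_r pq by auto
  have X: "c * (q * ln (q / r x)) = c * q * ln q - q * (c * ln (r x))" unfolding e3 by (simp add: algebra_simps)
  have X': "c * (q * ln (q / r x)) = (1 + lam + eta) * q * ln q - q * (lam * ln (qi x) + ln Z + ln (p x))"
    using X cr c_def by simp
  show ?thesis
  proof (cases "lam = 0")
    case True
    then show ?thesis unfolding e1 X' by (simp add: algebra_simps)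
  next
    case False
    then have e2: "ln (q / qi x) = ln q - ln (qi x)" using q pq by (simp add: ln_div)
    then show ?thesis unfolding e1 e2 X' by (simp add: algebra_simps)
  qed
qed

lemma ID:
  assumes qD: "q \<in> Dm"
  shows "integrable lborel (\<lambda>x. q x * ln (q x / r x))"
    "lagrangian p qi e1 e2 lam eta q = c * A q + (ln Z - lam * e1 + eta * (entropy qi - e2))"
proof -
  note qm[measurable] = cont_meas[OF Dm_D(1)[OF qD]]
  have i1: "integrable lborel (\<lambda>x. q x * ln (q x / p x))" using Dm_D(6)[OF qD] by (simp add: KL_finite_def)
  have i2: "integrable lborel (\<lambda>x. lam * (q x * ln (q x / qi x)))"
  proof (cases "lam = 0")
    case False then show ?thesis using Dm_D(7)[OF qD] by (simp add: KL_finite_def)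
  qed simp
  have i3: "integrable lborel (\<lambda>x. eta * (q x * ln (q x)))"
  proof (cases "eta = 0")
    case False then show ?thesis using Dm_D(8)[OF qD] by (simp add: entropy_finite_def)
  qed simp
  let ?G = "\<lambda>x. q x * ln (q x / p x) + lam * (q x * ln (q x / qi x)) + eta * (q x * ln (q x))"
  have iG: "integrable lborel ?G" using i1 i2 i3 by simp
  have AEeq: "AE x in lborel. ?G x = c * (q x * ln (q x / r x)) + q x * ln Z"
    using Dm_AE[OF qD] by eventually_elim (rule pointwise_id, use Dm_D(2)[OF qD] in auto)
  have iF: "integrable lborel (\<lambda>x. (?G x - q x * ln Z) / c)"
    using iG Dm_D(3)[OF qD] by simp
  show iq: "integrable lborel (\<lambda>x. q x * ln (q x / r x))"
  proof (rule integrable_cong_AE_imp[OF iF])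
    show "(\<lambda>x. q x * ln (q x / r x)) \<in> borel_measurable lborel" by measurable
    show "AE x in lborel. (?G x - q x * ln Z) / c = q x * ln (q x / r x)"
      using AEeq by eventually_elim (use c_pos in simp)
  qed
  have "integral\<^sup>L lborel ?G = integral\<^sup>L lborel (\<lambda>x. c * (q x * ln (q x / r x)) + q x * ln Z)"
    by (rule integral_cong_AE) (use AEeq in auto)
  also have "\<dots> = c * A q + ln Z"
    using iq Dm_D(3,4)[OF qD] by (simp add: A_def)
  finally have eq: "integral\<^sup>L lborel ?G = c * A q + ln Z" .
  have "integral\<^sup>L lborel ?G = KL q p + lam * KL q qi + eta * (\<integral>x. q x * ln (q x) \<partial>lborel)"
    using i1 i2 i3 by (simp add: KL_def)
  then show "lagrangian p qi e1 e2 lam eta q = c * A q + (ln Z - lam * e1 + eta * (entropy qi - e2))"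
    using eq unfolding lagrangian_def entropy_def[of q] by (simp add: algebra_simps)
qed

end

context ctx begin

definition "Zn = integral\<^sup>L lborel r"

lemma part2:
  assumes qnD: "(\<lambda>x. r x / Zn) \<in> Dm" and qD: "q \<in> Dm"
  shows "A (\<lambda>x. r x / Zn) \<le> A q"
proof -
  let ?qn = "\<lambda>x. r x / Zn"
  note qm[measurable] = cont_meas[OF Dm_D(1)[OF qD]]
  have Zn_nonneg: "0 \<le> Zn" unfolding Zn_def using r_nonneg by simp
  have Zn_pos: "0 < Zn"
  proof (rule ccontr)
    assume "\<not> 0 < Zn"
    then have "Zn = 0" using Zn_nonneg by simp
    then have "integral\<^sup>L lborel ?qn = 0" by simp
    with Dm_D(4)[OF qnD] show False by simp
  qed
  have ir: "integrable lborel r"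
  proof -
    have "integrable lborel (\<lambda>x. Zn * (r x / Zn))" using Dm_D(3)[OF qnD] by (rule integrable_mult_right)
    moreover have "(\<lambda>x. Zn * (r x / Zn)) = r" using Zn_pos by (simp add: fun_eq_iff)
    ultimately show ?thesis by simp
  qed
  have Ir: "integral\<^sup>L lborel r = Zn" by (simp add: Zn_def)
  have "A ?qn = (\<integral>x. ?qn x * (- ln Zn) \<partial>lborel)"
    unfolding A_def
  proof (rule Bochner_Integration.integral_cong[OF refl])
    fix x
    show "r x / Zn * ln (r x / Zn / r x) = r x / Zn * - ln Zn"
      using Zn_pos r_nonneg[of x] by (cases "r x = 0") (auto simp: ln_div)
  qed
  also have "\<dots> = - ln Zn" using Dm_D(4)[OF qnD] by simp
  finally have Aqn: "A ?qn = - ln Zn" .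
  have "(\<integral>x. q x - r x / Zn - q x * ln Zn \<partial>lborel) \<le> A q"
    unfolding A_def
  proof (rule integral_mono_AE)
    show "integrable lborel (\<lambda>x. q x - r x / Zn - q x * ln Zn)"
      using ir Dm_D(3)[OF qD] by simp
    show "integrable lborel (\<lambda>x. q x * ln (q x / r x))" by (rule ID(1)[OF qD])
    show "AE x in lborel. q x - r x / Zn - q x * ln Zn \<le> q x * ln (q x / r x)"
      using Dm_AE[OF qD]
    proof eventually_elim
      case (elim x)
      show ?case
      proof (cases "q x = 0")
        case True then show ?thesis using r_nonneg[of x] Zn_pos by simp
      next
        case False
        then have q: "0 < q x" using Dm_D(2)[OF qD, of x] by simp
        then have rx: "0 < r x" using elim by simp
        have y: "0 < q x * Zn / r x" using q rx Zn_pos by simp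
        have "ln (r x / (q x * Zn)) \<le> r x / (q x * Zn) - 1"
          using q rx Zn_pos by (intro ln_le_minus_one) simp
        then have "- ln (q x * Zn / r x) \<le> r x / (q x * Zn) - 1"
          using q rx Zn_pos by (simp add: ln_div)
        then have "q x * (- ln (q x * Zn / r x)) \<le> q x * (r x / (q x * Zn) - 1)"
          using q by (intro mult_left_mono) auto
        moreover have "ln (q x * Zn / r x) = ln (q x / r x) + ln Zn"
          using q rx Zn_pos by (simp add: ln_div ln_mult)
        moreover have "q x * (r x / (q x * Zn) - 1) = r x / Zn - q x"
          using q Zn_pos by (simp add: field_simps)
        ultimately show ?thesis by (simp add: algebra_simps)
      qed
    qed
  qed
  moreover have "(\<integral>x. q x - r x / Zn - q x * ln Zn \<partial>lborel) = - ln Zn"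
    using ir Dm_D(3,4)[OF qD] Ir Zn_pos by simp
  ultimately show ?thesis using Aqn by simp
qed

end

lemma integrable_bdd_mult:
  fixes g h :: "'a::euclidean_space \<Rightarrow> real"
  assumes "integrable lborel g" "h \<in> borel_measurable lborel" "\<And>x. \<bar>h x\<bar> \<le> B"
  shows "integrable lborel (\<lambda>x. h x * g x)"
proof (rule Bochner_Integration.integrable_bound[of _ "\<lambda>x. B * g x"])
  show "integrable lborel (\<lambda>x. B * g x)" using assms(1) by simp
  show "(\<lambda>x. h x * g x) \<in> borel_measurable lborel" using assms(1,2) by measurable
  show "AE x in lborel. norm (h x * g x) \<le> norm (B * g x)"
  proof (rule AE_I2)
    fix x
    have "\<bar>h x\<bar> * \<bar>g x\<bar> \<le> B * \<bar>g x\<bar>" using assms(3)[of x] by (intro mult_right_mono) auto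
    moreover have "0 \<le> B" using assms(3)[of x] by linarith
    ultimately show "norm (h x * g x) \<le> norm (B * g x)" by (simp add: abs_mult)
  qed
qed

lemma w_ln_bound:
  fixes w :: real
  assumes "1/2 \<le> w" "w \<le> 3/2"
  shows "\<bar>ln w\<bar> \<le> 1"
proof -
  have "ln w \<le> w - 1" using assms by (intro ln_le_minus_one) auto
  moreover have "ln (1/w) \<le> 1/w - 1" using assms by (intro ln_le_minus_one) auto
  moreover have "1/w \<le> 2" using assms by (simp add: field_simps)
  ultimately show ?thesis using assms by (simp add: ln_div abs_le_iff)
qed

lemma wlnw_le: "0 < (w::real) \<Longrightarrow> w * ln w \<le> (w - 1) + (w - 1)^2"
proof -
  assume "0 < w"
  then have "w * ln w \<le> w * (w - 1)" by (intro mult_left_mono ln_le_minus_one) auto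
  then show ?thesis by (simp add: power2_eq_square algebra_simps)
qed

context ctx begin

lemma mult_KL_finite:
  assumes "KL_finite q s" "\<And>x. 0 \<le> q x" "\<And>x. 1/2 \<le> w x" "\<And>x. w x \<le> 3/2"
    and [measurable]: "q \<in> borel_measurable lborel" "w \<in> borel_measurable lborel" "s \<in> borel_measurable lborel"
    and "integrable lborel q"
  shows "KL_finite (\<lambda>x. q x * w x) s"
  unfolding KL_finite_def
proof
  have "AE x in lborel. 0 < q x \<longrightarrow> 0 < s x" using assms(1) by (simp add: KL_finite_def)
  then show "AE x in lborel. 0 < q x * w x \<longrightarrow> 0 < s x"
  proof eventually_elim
    case (elim x)
    have "0 < w x" using assms(3)[of x] by simp
    then show ?case using elim by (auto simp: zero_less_mult_iff)
  qed
  have i1: "integrable lborel (\<lambda>x. w x * (q x * ln (q x / s x)))"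
  proof (rule integrable_bdd_mult[where B="3/2"])
    show "integrable lborel (\<lambda>x. q x * ln (q x / s x))" using assms(1) by (simp add: KL_finite_def)
    show "w \<in> borel_measurable lborel" by measurable
    fix x show "\<bar>w x\<bar> \<le> 3/2" using assms(3,4)[of x] by (simp add: abs_le_iff)
  qed
  have i2: "integrable lborel (\<lambda>x. (w x * ln (w x)) * q x)"
  proof (rule integrable_bdd_mult[where B="3/2", OF assms(8)])
    show "(\<lambda>x. w x * ln (w x)) \<in> borel_measurable lborel" by measurable
    fix x
    have "\<bar>ln (w x)\<bar> \<le> 1" using w_ln_bound assms(3,4) by blast
    then have "\<bar>w x\<bar> * \<bar>ln (w x)\<bar> \<le> 3/2 * 1"
      using assms(3,4)[of x] by (intro mult_mono) auto
    then show "\<bar>w x * ln (w x)\<bar> \<le> 3/2" by (simp add: abs_mult)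
  qed
  have AEe: "AE x in lborel. w x * (q x * ln (q x / s x)) + (w x * ln (w x)) * q x = q x * w x * ln (q x * w x / s x)"
    using \<open>AE x in lborel. 0 < q x \<longrightarrow> 0 < s x\<close>
  proof eventually_elim
    case (elim x)
    show ?case
    proof (cases "q x = 0")
      case False
      then have "0 < q x" "0 < s x" "0 < w x" using assms(2,3)[of x] elim by auto
      then have "ln (q x * w x / s x) = ln (q x / s x) + ln (w x)"
        by (simp add: ln_div ln_mult)
      then show ?thesis by (simp add: algebra_simps)
    qed simp
  qed
  have I: "integrable lborel (\<lambda>x. w x * (q x * ln (q x / s x)) + (w x * ln (w x)) * q x)"
    using i1 i2 by (rule Bochner_Integration.integrable_add)
  have M: "(\<lambda>x. q x * w x * ln (q x * w x / s x)) \<in> borel_measurable lborel" by measurable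
  show "integrable lborel (\<lambda>x. q x * w x * ln (q x * w x / s x))"
    by (rule integrable_cong_AE_imp[OF I M AEe])
qed

lemma mult_entropy_finite:
  assumes "entropy_finite q" "\<And>x. 0 \<le> q x" "\<And>x. 1/2 \<le> w x" "\<And>x. w x \<le> 3/2"
    and [measurable]: "q \<in> borel_measurable lborel" "w \<in> borel_measurable lborel"
    and "integrable lborel q"
  shows "entropy_finite (\<lambda>x. q x * w x)"
proof -
  have "KL_finite q (\<lambda>_. 1)" using assms(1) by (simp add: KL_finite_def entropy_finite_def)
  then have "KL_finite (\<lambda>x. q x * w x) (\<lambda>_. 1)"
    by (rule mult_KL_finite[OF _ assms(2,3,4,5,6) _ assms(7)]) simp
  then show ?thesis by (simp add: KL_finite_def entropy_finite_def)
qed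

end

lemma quad_zero:
  fixes I :: real
  assumes "\<And>t. \<bar>t\<bar> \<le> 1/2 \<Longrightarrow> 0 \<le> t * I + t^2"
  shows "I = 0"
proof (rule ccontr)
  assume "I \<noteq> 0"
  define s where "s = min (1/4) (\<bar>I\<bar>/2)"
  have s: "0 < s" "s \<le> 1/4" "s \<le> \<bar>I\<bar>/2" using \<open>I \<noteq> 0\<close> by (auto simp: s_def)
  show False
  proof (cases "I > 0")
    case True
    have "0 \<le> (-s) * I + (-s)^2" using assms[of "-s"] s by simp
    then have "s * I \<le> s * s" by (simp add: power2_eq_square)
    then have "I \<le> s" using s by simp
    then show False using s True by simp
  next
    case False
    then have "I < 0" using \<open>I \<noteq> 0\<close> by simp
    have "0 \<le> s * I + s^2" using assms[of s] s by simp
    then have "s * (-I) \<le> s * s" by (simp add: power2_eq_square)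
    then have "-I \<le> s" using mult_le_cancel_left_pos[of s "-I" s] s by blast
    then show False using s \<open>I < 0\<close> by simp
  qed
qed

lemma Ck_affine: "Ck k ch \<Longrightarrow> Ck k (\<lambda>x. 1 + t * (ch x - m))"
proof -
  assume "Ck k ch"
  then have "Ck k (\<lambda>x. t * ch x + (1 - t * m))" by (intro Ck_add Ck_cmult Ck_const)
  moreover have "(\<lambda>x. t * ch x + (1 - t * m)) = (\<lambda>x. 1 + t * (ch x - m))" by (simp add: fun_eq_iff algebra_simps)
  ultimately show ?thesis by simp
qed

context ctx begin

lemma pert:
  assumes qD: "q \<in> Dm" and min: "\<forall>q'\<in>Dm. A q \<le> A q'"
    and chi: "smooth ch" "\<And>x. 0 \<le> ch x" "\<And>x. ch x \<le> 1"
  shows "(\<integral>x. ch x * (q x * ln (q x / r x)) \<partial>lborel) = (\<integral>x. q x * ch x \<partial>lborel) * A q"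
proof -
  note qm[measurable] = cont_meas[OF Dm_D(1)[OF qD]]
  have chim[measurable]: "ch \<in> borel_measurable lborel"
    using chi(1) Ck_cont cont_meas unfolding smooth_def by blast
  define f where "f = (\<lambda>x. q x * ln (q x / r x))"
  have fm[measurable]: "f \<in> borel_measurable lborel" unfolding f_def by measurable
  define \<mu> where "\<mu> = (\<integral>x. q x * ch x \<partial>lborel)"
  define I where "I = (\<integral>x. (ch x - \<mu>) * f x \<partial>lborel)"
  have iq: "integrable lborel q" and q1: "integral\<^sup>L lborel q = 1" and q0: "\<And>x. 0 \<le> q x"
    using Dm_D[OF qD] by auto
  have iqs: "smooth q" using Dm_D[OF qD] by auto
  have ifq: "integrable lborel f" unfolding f_def by (rule ID(1)[OF qD])
  have Af: "A q = integral\<^sup>L lborel f" by (simp add: A_def f_def)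
  have iqc: "integrable lborel (\<lambda>x. ch x * q x)"
    by (rule integrable_bdd_mult[OF iq chim, where B=1]) (use chi in auto)
  have mu0: "0 \<le> \<mu>" unfolding \<mu>_def using chi q0 by simp
  have mu1: "\<mu> \<le> 1"
  proof -
    have "\<mu> \<le> integral\<^sup>L lborel q" unfolding \<mu>_def
    proof (rule integral_mono)
      show "integrable lborel (\<lambda>x. q x * ch x)" using iqc by (simp add: mult.commute)
      show "integrable lborel q" by (rule iq)
      fix x show "q x * ch x \<le> q x" using chi(2,3)[of x] q0[of x] by (simp add: mult_right_le_one_le)
    qed
    then show ?thesis using q1 by simp
  qed
  have psi_b: "\<bar>ch x - \<mu>\<bar> \<le> 1" for x using chi(2,3)[of x] mu0 mu1 by (simp add: abs_le_iff)
  have ipf: "integrable lborel (\<lambda>x. (ch x - \<mu>) * f x)"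
    by (rule integrable_bdd_mult[OF ifq, where B=1]) (use psi_b in auto)
  have ipq: "integrable lborel (\<lambda>x. (ch x - \<mu>) * q x)"
    by (rule integrable_bdd_mult[OF iq, where B=1]) (use psi_b in auto)
  have psi2: "(ch x - \<mu>)^2 \<le> 1" for x using psi_b[of x] by (simp add: abs_square_le_1)
  have ipq2: "integrable lborel (\<lambda>x. (ch x - \<mu>)^2 * q x)"
    by (rule integrable_bdd_mult[OF iq, where B=1]) (use psi2 in auto)
  have Ipq: "(\<integral>x. (ch x - \<mu>) * q x \<partial>lborel) = 0"
  proof -
    have "(\<integral>x. (ch x - \<mu>) * q x \<partial>lborel) = (\<integral>x. ch x * q x - \<mu> * q x \<partial>lborel)"
      by (simp add: algebra_simps)
    also have "\<dots> = \<mu> - \<mu> * 1" using iqc iq q1 by (simp add: \<mu>_def mult.commute)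
    finally show ?thesis by simp
  qed
  have Ipq2: "(\<integral>x. (ch x - \<mu>)^2 * q x \<partial>lborel) \<le> 1"
  proof -
    have "(\<integral>x. (ch x - \<mu>)^2 * q x \<partial>lborel) \<le> integral\<^sup>L lborel q"
    proof (intro integral_mono ipq2 iq)
      fix x
      have "(ch x - \<mu>)^2 \<le> 1" by (rule psi2)
      then show "(ch x - \<mu>)^2 * q x \<le> q x" using q0[of x] by (simp add: mult_left_le_one_le)
    qed
    then show ?thesis using q1 by simp
  qed
  have key: "0 \<le> t * I + t^2" if t: "\<bar>t\<bar> \<le> 1/2" for t
  proof -
    define w where "w = (\<lambda>x. 1 + t * (ch x - \<mu>))"
    have wm[measurable]: "w \<in> borel_measurable lborel" unfolding w_def by measurable
    have tb: "\<bar>t * (ch x - \<mu>)\<bar> \<le> 1/2" for x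
    proof -
      have "\<bar>t\<bar> * \<bar>ch x - \<mu>\<bar> \<le> 1/2 * 1" using t psi_b[of x] by (intro mult_mono) auto
      then show ?thesis by (simp add: abs_mult)
    qed
    have w1: "1/2 \<le> w x" and w2: "w x \<le> 3/2" for x using tb[of x] by (auto simp: w_def abs_le_iff)
    define qt where "qt = (\<lambda>x. q x * w x)"
    have qtm[measurable]: "qt \<in> borel_measurable lborel" unfolding qt_def by measurable
    have iqt: "integrable lborel qt"
    proof -
      have "integrable lborel (\<lambda>x. w x * q x)"
      proof (rule integrable_bdd_mult[OF iq wm, where B="3/2"])
        fix x
        have "0 \<le> w x" using w1[of x] by simp
        then show "\<bar>w x\<bar> \<le> 3/2" using w2[of x] by simp
      qed
      then show ?thesis by (simp add: qt_def mult.commute)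
    qed
    have qt_int: "integral\<^sup>L lborel qt = 1"
    proof -
      have "integral\<^sup>L lborel qt = (\<integral>x. q x + t * ((ch x - \<mu>) * q x) \<partial>lborel)"
        by (simp add: qt_def w_def algebra_simps)
      also have "\<dots> = 1" using iq ipq q1 Ipq by simp
      finally show ?thesis .
    qed
    have qtD: "qt \<in> Dm"
    proof -
      have "smooth qt"
        unfolding smooth_def qt_def w_def
        using iqs chi(1) by (auto simp: smooth_def intro!: Ck_mult Ck_affine)
      moreover have "\<forall>x. 0 \<le> qt x"
      proof
        fix x have "0 \<le> w x" using w1[of x] by simp
        then show "0 \<le> qt x" using q0[of x] by (simp add: qt_def)
      qed
      moreover have "KL_finite qt p"
        unfolding qt_def by (rule mult_KL_finite[OF Dm_D(6)[OF qD] q0 w1 w2 qm wm meas(1) iq])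
      moreover have "lam \<noteq> 0 \<longrightarrow> KL_finite qt qi"
        unfolding qt_def using mult_KL_finite[OF Dm_D(7)[OF qD] q0 w1 w2 qm wm meas(2) iq] by blast
      moreover have "eta \<noteq> 0 \<longrightarrow> entropy_finite qt"
        unfolding qt_def using mult_entropy_finite[OF Dm_D(8)[OF qD] q0 w1 w2 qm wm iq] by blast
      ultimately show ?thesis
        using iqt qt_int unfolding Dm_def lagr_domain_def smooth_densities_def by auto
    qed
    have "A qt \<le> (\<integral>x. f x + t * ((ch x - \<mu>) * f x) + t * ((ch x - \<mu>) * q x) + t^2 * ((ch x - \<mu>)^2 * q x) \<partial>lborel)"
      unfolding A_def
    proof (rule integral_mono_AE)
      show "integrable lborel (\<lambda>x. qt x * ln (qt x / r x))" by (rule ID(1)[OF qtD])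
      show "integrable lborel (\<lambda>x. f x + t * ((ch x - \<mu>) * f x) + t * ((ch x - \<mu>) * q x) + t^2 * ((ch x - \<mu>)^2 * q x))"
        using ifq ipf ipq ipq2 by simp
      show "AE x in lborel. qt x * ln (qt x / r x) \<le> f x + t * ((ch x - \<mu>) * f x) + t * ((ch x - \<mu>) * q x) + t^2 * ((ch x - \<mu>)^2 * q x)"
        using Dm_AE[OF qD]
      proof eventually_elim
        case (elim x)
        show ?case
        proof (cases "q x = 0")
          case True then show ?thesis by (simp add: qt_def f_def)
        next
          case False
          then have qp: "0 < q x" using q0[of x] by simp
          then have rp: "0 < r x" using elim by simp
          have wp: "0 < w x" using w1[of x] by simp
          have "qt x * ln (qt x / r x) = w x * f x + (w x * ln (w x)) * q x"
            using qp rp wp by (simp add: qt_def f_def ln_div ln_mult algebra_simps)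
          also have "\<dots> \<le> w x * f x + ((w x - 1) + (w x - 1)^2) * q x"
            using wlnw_le[OF wp] q0[of x] by (intro add_left_mono mult_right_mono) auto
          also have "\<dots> = f x + t * ((ch x - \<mu>) * f x) + t * ((ch x - \<mu>) * q x) + t^2 * ((ch x - \<mu>)^2 * q x)"
            by (simp add: w_def power2_eq_square algebra_simps)
          finally show ?thesis .
        qed
      qed
    qed
    also have "\<dots> = A q + t * I + t^2 * (\<integral>x. (ch x - \<mu>)^2 * q x \<partial>lborel)"
      using ifq ipf ipq ipq2 Ipq by (simp add: Af I_def)
    also have "\<dots> \<le> A q + t * I + t^2 * 1"
      using Ipq2 by (intro add_left_mono mult_left_mono) auto
    finally have "A qt \<le> A q + t * I + t^2" by simp
    moreover have "A q \<le> A qt" using min qtD by blast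
    ultimately show ?thesis by simp
  qed
  have "I = 0" using quad_zero key by blast
  then have "(\<integral>x. ch x * f x - \<mu> * f x \<partial>lborel) = 0" by (simp add: I_def algebra_simps)
  then have "(\<integral>x. ch x * f x \<partial>lborel) = \<mu> * integral\<^sup>L lborel f"
    using ipf ifq
    by (subst (asm) Bochner_Integration.integral_diff)
       (auto intro: integrable_bdd_mult[OF ifq chim, where B=1] simp: chi abs_le_iff order_trans[OF _ chi(2)])
  then show ?thesis by (simp add: f_def \<mu>_def Af)
qed

end

lemma cont_on_ball_pt:
  fixes f :: "'a::euclidean_space \<Rightarrow> real"
  assumes "continuous_on (ball x0 e) f" "0 < e" "0 < \<epsilon>"
  shows "\<exists>d>0. d \<le> e \<and> (\<forall>y\<in>ball x0 d. \<bar>f y - f x0\<bar> < \<epsilon>)"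
proof -
  have "x0 \<in> ball x0 e" using assms by simp
  then obtain \<delta> where \<delta>: "\<delta> > 0" "\<forall>x'\<in>ball x0 e. dist x' x0 < \<delta> \<longrightarrow> dist (f x') (f x0) < \<epsilon>"
    using assms(1,3) unfolding continuous_on_iff by blast
  show ?thesis
    by (rule exI[of _ "min \<delta> e"]) (use \<delta> assms(2) in \<open>auto simp: dist_real_def dist_commute\<close>)
qed

lemma sign_lemma:
  fixes a b A :: real
  assumes "\<bar>a - b\<bar> < \<bar>b - A\<bar> / 2" "b - A \<noteq> 0"
  shows "0 < (b - A) * (a - A)"
proof (cases "b > A")
  case True
  then have "\<bar>b - A\<bar> = b - A" by simp
  then have h1: "\<bar>a - b\<bar> < (b - A) / 2" using assms(1) by simp
  have h2: "b - a \<le> \<bar>a - b\<bar>" by linarith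
  have "b - a < (b - A) / 2" using h1 h2 by linarith
  then have "2 * b - 2 * a < b - A" by (simp add: field_simps)
  then have "a - A > 0" using True by linarith
  then show ?thesis using True by simp
next
  case False
  then have "b < A" using assms by simp
  then have "\<bar>b - A\<bar> = A - b" by simp
  then have h1: "\<bar>a - b\<bar> < (A - b) / 2" using assms(1) by simp
  have h2: "a - b \<le> \<bar>a - b\<bar>" by linarith
  have "a - b < (A - b) / 2" using h1 h2 by linarith
  then have "2 * a - 2 * b < A - b" by (simp add: field_simps)
  then have "a - A < 0" using \<open>b < A\<close> by linarith
  then show ?thesis using \<open>b < A\<close> by (simp add: mult_neg_neg)
qed

context ctx begin

lemma pos_ball:
  fixes f :: "'a \<Rightarrow> real"
  assumes "continuous_on UNIV f" "0 < f x0"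
  shows "\<exists>e>0. \<forall>y\<in>ball x0 e. f x0 / 2 < f y"
proof -
  obtain d where d: "d > 0" "\<forall>y\<in>ball x0 d. \<bar>f y - f x0\<bar> < f x0 / 2"
    using cont_ball[OF assms(1), of "f x0 / 2" x0] assms(2) by auto
  have "f x0 / 2 < f y" if "y \<in> ball x0 d" for y
  proof -
    have "\<bar>f y - f x0\<bar> < f x0 / 2" using d(2) that by blast
    then show ?thesis by arith
  qed
  then show ?thesis using d(1) by blast
qed

lemma const_U:
  assumes qD: "q \<in> Dm" and min: "\<forall>q'\<in>Dm. A q \<le> A q'"
    and x0: "0 < q x0" "0 < r x0"
  shows "ln (q x0 / r x0) = A q"
proof (rule ccontr)
  assume ne: "ln (q x0 / r x0) \<noteq> A q"
  define g0 where "g0 = ln (q x0 / r x0) - A q"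
  have g0: "g0 \<noteq> 0" using ne by (simp add: g0_def)
  note qc = Dm_D(1)[OF qD]
  note qm[measurable] = cont_meas[OF qc]
  obtain e1 where e1: "e1 > 0" "\<forall>y\<in>ball x0 e1. q x0 / 2 < q y" using pos_ball[OF qc x0(1)] by blast
  obtain e2 where e2: "e2 > 0" "\<forall>y\<in>ball x0 e2. r x0 / 2 < r y" using pos_ball[OF r_cont x0(2)] by blast
  define e where "e = min e1 e2"
  have e: "e > 0" "\<And>y. y \<in> ball x0 e \<Longrightarrow> 0 < q y \<and> 0 < r y"
  proof -
    show "e > 0" using e1 e2 by (simp add: e_def)
    fix y assume "y \<in> ball x0 e"
    then have "y \<in> ball x0 e1" "y \<in> ball x0 e2" by (auto simp: e_def)
    then have "q x0 / 2 < q y" "r x0 / 2 < r y" using e1 e2 by auto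
    then show "0 < q y \<and> 0 < r y" using x0 by linarith
  qed
  have cq: "continuous_on (ball x0 e) q" by (rule continuous_on_subset[OF qc]) auto
  have cr: "continuous_on (ball x0 e) r" by (rule continuous_on_subset[OF r_cont]) auto
  have nz0: "r y \<noteq> 0 \<and> q y / r y \<noteq> 0" if "y \<in> ball x0 e" for y
  proof -
    have "0 < q y \<and> 0 < r y" using e(2) that by blast
    then show ?thesis by simp
  qed
  have nz: "\<forall>y\<in>ball x0 e. r y \<noteq> 0" "\<forall>y\<in>ball x0 e. q y / r y \<noteq> 0"
    using nz0 by blast+
  have "continuous_on (ball x0 e) (\<lambda>y. ln (q y / r y))"
    by (rule continuous_on_ln[OF continuous_on_divide[OF cq cr nz(1)] nz(2)])
  then obtain d where d: "d > 0" "d \<le> e" "\<forall>y\<in>ball x0 d. \<bar>ln (q y / r y) - ln (q x0 / r x0)\<bar> < \<bar>g0\<bar> / 2"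
    using cont_on_ball_pt[of x0 e "\<lambda>y. ln (q y / r y)" "\<bar>g0\<bar>/2"] e(1) g0 by auto
  have inball: "0 < q y \<and> 0 < r y \<and> 0 < g0 * (ln (q y / r y) - A q)" if "y \<in> ball x0 d" for y
  proof -
    have "y \<in> ball x0 e" using that d(2) by auto
    then have "0 < q y \<and> 0 < r y" using e(2) by blast
    moreover have "\<bar>ln (q y / r y) - ln (q x0 / r x0)\<bar> < \<bar>g0\<bar> / 2" using d(3) that by blast
    then have "0 < g0 * (ln (q y / r y) - A q)"
      unfolding g0_def by (rule sign_lemma) (use g0 g0_def in auto)
    ultimately show ?thesis by blast
  qed
  define ch where "ch = bump x0 d"
  have chs: "smooth ch" "\<And>x. 0 \<le> ch x" "\<And>x. ch x \<le> 1"
    unfolding ch_def using bump_smooth bump_nonneg bump_le1 by auto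
  have chm[measurable]: "ch \<in> borel_measurable lborel" unfolding ch_def using bump_cont cont_meas by blast
  have P: "(\<integral>x. ch x * (q x * ln (q x / r x)) \<partial>lborel) = (\<integral>x. q x * ch x \<partial>lborel) * A q"
    by (rule pert[OF qD min chs])
  have i1: "integrable lborel (\<lambda>x. ch x * (q x * ln (q x / r x)))"
    by (rule integrable_bdd_mult[OF ID(1)[OF qD] chm, where B=1]) (use chs in \<open>auto simp: abs_le_iff intro: order_trans[OF _ chs(2)]\<close>)
  have i2: "integrable lborel (\<lambda>x. ch x * q x)"
    by (rule integrable_bdd_mult[OF Dm_D(3)[OF qD] chm, where B=1]) (use chs in \<open>auto simp: abs_le_iff intro: order_trans[OF _ chs(2)]\<close>)
  define h where "h = (\<lambda>x. g0 * (ch x * (q x * ln (q x / r x))) - g0 * A q * (ch x * q x))"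
  have ih: "integrable lborel h" unfolding h_def using i1 i2 by simp
  have Ih: "integral\<^sup>L lborel h = 0"
    unfolding h_def using i1 i2 P by (simp add: mult.commute[of "q _" "ch _"])
  have hx: "h x = ch x * q x * (g0 * (ln (q x / r x) - A q))" for x by (simp add: h_def algebra_simps)
  have hpos: "0 < integral\<^sup>L lborel h"
  proof (rule integral_pos_ball[OF ih _ d(1)])
    fix x
    show "0 \<le> h x"
    proof (cases "x \<in> ball x0 d")
      case True
      have "0 \<le> ch x * q x" using inball[OF True] chs(2)[of x] by simp
      moreover have "0 \<le> g0 * (ln (q x / r x) - A q)" using inball[OF True] by simp
      ultimately show ?thesis unfolding hx by (rule mult_nonneg_nonneg)
    next
      case False
      then have "ch x = 0" using bump_pos[OF d(1), of x0 x] bump_nonneg[of x0 d x] by (simp add: ch_def)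
      then show ?thesis by (simp add: h_def)
    qed
  next
    fix x assume xb: "x \<in> ball x0 d"
    have "0 < ch x" using bump_pos[OF d(1), of x0 x] xb by (simp add: ch_def)
    then show "0 < h x" unfolding hx using inball[OF xb] by simp
  qed
  then show False using Ih by simp
qed

end

lemma abs_xlnx: "0 \<le> (x::real) \<Longrightarrow> \<bar>x * ln x\<bar> \<le> x^2 + 1"
proof -
  assume x: "0 \<le> x"
  show ?thesis
  proof (cases "x \<le> 1")
    case True
    show ?thesis
    proof (cases "x = 0")
      case False
      then have xp: "0 < x" using x by simp
      have "ln (1/x) \<le> 1/x - 1" using xp by (intro ln_le_minus_one) simp
      then have A: "x * ln (1/x) \<le> x * (1/x - 1)" using xp by (intro mult_left_mono) auto
      have B: "x * ln (1/x) = - (x * ln x)" using xp by (simp add: ln_div)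
      have C: "x * (1/x - 1) = 1 - x" using xp by (simp add: field_simps)
      have "- (x * ln x) \<le> 1 - x" using A B C by linarith
      moreover have "x * ln x \<le> 0" using xp True by (simp add: mult_nonneg_nonpos)
      moreover have "0 \<le> x^2" by simp
      ultimately show ?thesis using x by linarith
    qed simp
  next
    case False
    then have "0 \<le> ln x" by simp
    moreover have "ln x \<le> x - 1" using False by (intro ln_le_minus_one) simp
    ultimately have "0 \<le> x * ln x" "x * ln x \<le> x * (x - 1)" using x by (auto intro: mult_left_mono)
    moreover have "x * (x - 1) = x^2 - x" by (simp add: power2_eq_square algebra_simps)
    ultimately show ?thesis using x by simp
  qed
qed

lemma KL_finite_loc:
  fixes g s :: "'a::euclidean_space \<Rightarrow> real"
  assumes [measurable]: "g \<in> borel_measurable lborel" "s \<in> borel_measurable lborel"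
    and g0: "\<And>y. 0 \<le> g y" and gG: "\<And>y. g y \<le> G"
    and gb: "\<And>y. 0 < g y \<Longrightarrow> y \<in> ball x0 \<rho>"
    and sb: "\<And>y. y \<in> ball x0 \<rho> \<Longrightarrow> a \<le> s y \<and> s y \<le> b" and a: "0 < a"
  shows "KL_finite g s"
  unfolding KL_finite_def
proof
  show "AE x in lborel. 0 < g x \<longrightarrow> 0 < s x"
    by (rule AE_I2) (use gb sb a in force)
  let ?B = "G^2 + 1 + G * (\<bar>ln a\<bar> + \<bar>ln b\<bar>)"
  show "integrable lborel (\<lambda>x. g x * ln (g x / s x))"
  proof (rule integrable_bounded_cball[where B="?B" and ?x0.0=x0 and \<rho>=\<rho>])
    show "(\<lambda>x. g x * ln (g x / s x)) \<in> borel_measurable lborel" by measurable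
    fix y
    have G0: "0 \<le> G" using g0 gG order_trans by blast
    show "\<bar>g y * ln (g y / s y)\<bar> \<le> ?B * indicator (cball x0 \<rho>) y"
    proof (cases "g y = 0")
      case True
      have "0 \<le> ?B" using G0 by simp
      then show ?thesis using True by simp
    next
      case False
      then have gp: "0 < g y" using g0[of y] by simp
      then have yb: "y \<in> ball x0 \<rho>" by (rule gb)
      then have ind: "indicator (cball x0 \<rho>) y = (1::real)" by auto
      have s: "a \<le> s y" "s y \<le> b" using sb[OF yb] by auto
      then have sp: "0 < s y" using a by simp
      have "\<bar>ln (s y)\<bar> \<le> \<bar>ln a\<bar> + \<bar>ln b\<bar>"
      proof -
        have "ln a \<le> ln (s y)" "ln (s y) \<le> ln b" using s a sp by auto
        then show ?thesis by (simp add: abs_le_iff) linarith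
      qed
      then have l2: "g y * \<bar>ln (s y)\<bar> \<le> G * (\<bar>ln a\<bar> + \<bar>ln b\<bar>)"
        using gG[of y] g0[of y] by (intro mult_mono) auto
      have l1: "\<bar>g y * ln (g y)\<bar> \<le> G^2 + 1"
        using abs_xlnx[OF g0[of y]] power_mono[OF gG[of y] g0[of y], of 2] by linarith
      have eq: "g y * ln (g y / s y) = g y * ln (g y) - g y * ln (s y)" using gp sp by (simp add: ln_div algebra_simps)
      have "\<bar>g y * ln (g y / s y)\<bar> \<le> \<bar>g y * ln (g y)\<bar> + \<bar>g y * ln (s y)\<bar>"
        unfolding eq by (rule abs_triangle_ineq4)
      moreover have "\<bar>g y * ln (s y)\<bar> = g y * \<bar>ln (s y)\<bar>" using gp by (simp add: abs_mult)
      ultimately have "\<bar>g y * ln (g y / s y)\<bar> \<le> \<bar>g y * ln (g y)\<bar> + g y * \<bar>ln (s y)\<bar>" by simp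
      then show ?thesis using l1 l2 ind by simp
    qed
  qed
qed

lemma mix_pt:
  fixes q g s t :: real
  assumes "0 \<le> q" "0 \<le> g" "0 < q \<Longrightarrow> 0 < s" "0 < g \<Longrightarrow> q = 0 \<and> 0 < s" "0 < t" "t < 1"
  shows "((1-t) * q + t * g) * ln (((1-t) * q + t * g) / s)
     = (1-t) * (q * ln (q / s)) + ((1-t) * ln (1-t)) * q + t * (g * ln (g / s)) + (t * ln t) * g"
proof (cases "g = 0")
  case True
  show ?thesis
  proof (cases "q = 0")
    case False
    then have "0 < q" "0 < s" using assms by auto
    then have "ln ((1-t) * q / s) = ln (1-t) + ln (q / s)" using assms by (simp add: ln_div ln_mult)
    then show ?thesis using True by (simp add: algebra_simps)
  qed (use True in simp)
next
  case False
  then have "0 < g" using assms by simp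
  then have q0: "q = 0" and "0 < s" using assms by auto
  then have "ln (t * g / s) = ln t + ln (g / s)" using assms \<open>0 < g\<close> by (simp add: ln_div ln_mult)
  then show ?thesis using q0 by (simp add: algebra_simps)
qed

lemma mix_KL:
  fixes q g s :: "'a::euclidean_space \<Rightarrow> real"
  assumes [measurable]: "q \<in> borel_measurable lborel" "g \<in> borel_measurable lborel" "s \<in> borel_measurable lborel"
    and KLq: "KL_finite q s" and KLg: "KL_finite g s"
    and q0: "\<And>y. 0 \<le> q y" and g0: "\<And>y. 0 \<le> g y"
    and dis: "\<And>y. 0 < g y \<Longrightarrow> q y = 0 \<and> 0 < s y"
    and iq: "integrable lborel q" and ig: "integrable lborel g"
    and t: "0 < t" "t < 1"
  shows "KL_finite (\<lambda>y. (1-t) * q y + t * g y) s"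
    "(\<integral>y. ((1-t) * q y + t * g y) * ln (((1-t) * q y + t * g y) / s y) \<partial>lborel)
      = (1-t) * (\<integral>y. q y * ln (q y / s y) \<partial>lborel) + ((1-t) * ln (1-t)) * integral\<^sup>L lborel q
        + t * (\<integral>y. g y * ln (g y / s y) \<partial>lborel) + (t * ln t) * integral\<^sup>L lborel g"
proof -
  have AEq: "AE y in lborel. 0 < q y \<longrightarrow> 0 < s y" using KLq by (simp add: KL_finite_def)
  have i1: "integrable lborel (\<lambda>y. q y * ln (q y / s y))" using KLq by (simp add: KL_finite_def)
  have i2: "integrable lborel (\<lambda>y. g y * ln (g y / s y))" using KLg by (simp add: KL_finite_def)
  let ?m = "\<lambda>y. (1-t) * q y + t * g y"
  let ?R = "\<lambda>y. (1-t) * (q y * ln (q y / s y)) + ((1-t) * ln (1-t)) * q y + t * (g y * ln (g y / s y)) + (t * ln t) * g y"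
  have AEe: "AE y in lborel. ?R y = ?m y * ln (?m y / s y)"
    using AEq
  proof eventually_elim
    case (elim y)
    show ?case by (rule mix_pt[symmetric]) (use elim q0 g0 dis t in auto)
  qed
  have iR: "integrable lborel ?R" using i1 i2 iq ig by simp
  have M: "(\<lambda>y. ?m y * ln (?m y / s y)) \<in> borel_measurable lborel" by measurable
  have im: "integrable lborel (\<lambda>y. ?m y * ln (?m y / s y))"
    by (rule integrable_cong_AE_imp[OF iR M AEe])
  show "KL_finite ?m s"
    unfolding KL_finite_def
  proof
    show "AE x in lborel. 0 < ?m x \<longrightarrow> 0 < s x"
      using AEq
    proof eventually_elim
      case (elim y)
      show ?case
      proof
        assume "0 < ?m y"
        then have "0 < q y \<or> 0 < g y" using q0[of y] g0[of y] t
          by (metis add.right_neutral less_eq_real_def mult_eq_0_iff)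
        then show "0 < s y" using elim dis by blast
      qed
    qed
    show "integrable lborel (\<lambda>y. ?m y * ln (?m y / s y))" by (rule im)
  qed
  have "(\<integral>y. ?m y * ln (?m y / s y) \<partial>lborel) = integral\<^sup>L lborel ?R"
    by (rule integral_cong_AE[OF M _ AEe[THEN AE_mp, OF AE_I2]]) (use iR in auto)
  also have "\<dots> = (1-t) * (\<integral>y. q y * ln (q y / s y) \<partial>lborel) + ((1-t) * ln (1-t)) * integral\<^sup>L lborel q
        + t * (\<integral>y. g y * ln (g y / s y) \<partial>lborel) + (t * ln t) * integral\<^sup>L lborel g"
    using i1 i2 iq ig by simp
  finally show "(\<integral>y. ?m y * ln (?m y / s y) \<partial>lborel) = (1-t) * (\<integral>y. q y * ln (q y / s y) \<partial>lborel) + ((1-t) * ln (1-t)) * integral\<^sup>L lborel q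
        + t * (\<integral>y. g y * ln (g y / s y) \<partial>lborel) + (t * ln t) * integral\<^sup>L lborel g" .
qed

context ctx begin

lemma near_ball:
  fixes f :: "'a \<Rightarrow> real"
  assumes "continuous_on UNIV f" "0 < f x0"
  shows "\<exists>e>0. \<forall>y\<in>ball x0 e. f x0 / 2 < f y \<and> f y < 3/2 * f x0"
proof -
  obtain d where d: "d > 0" "\<forall>y\<in>ball x0 d. \<bar>f y - f x0\<bar> < f x0 / 2"
    using cont_ball[OF assms(1), of "f x0 / 2" x0] assms(2) by auto
  have "f x0 / 2 < f y \<and> f y < 3/2 * f x0" if "y \<in> ball x0 d" for y
  proof -
    have "\<bar>f y - f x0\<bar> < f x0 / 2" using d(2) that by blast
    then show ?thesis by arith
  qed
  then show ?thesis using d(1) by blast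
qed

lemma supp:
  assumes qD: "q \<in> Dm" and min: "\<forall>q'\<in>Dm. A q \<le> A q'" and x0: "0 < r x0"
  shows "0 < q x0"
proof (rule ccontr)
  assume "\<not> 0 < q x0"
  then have qx0: "q x0 = 0" using Dm_D(2)[OF qD, of x0] by simp
  note qc = Dm_D(1)[OF qD]
  note qm[measurable] = cont_meas[OF qc]
  have q0: "\<And>y. 0 \<le> q y" using Dm_D(2)[OF qD] .
  define \<kappa> where "\<kappa> = exp (A q)"
  have kp: "0 < \<kappa>" by (simp add: \<kappa>_def)
  have px0: "0 < p x0" and qix0: "lam \<noteq> 0 \<Longrightarrow> 0 < qi x0" using r_pos_D[OF x0] by auto
  obtain e1 where e1: "e1 > 0" "\<forall>y\<in>ball x0 e1. r x0 / 2 < r y" using pos_ball[OF r_cont x0] by blast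
  obtain e2 where e2: "e2 > 0" "\<forall>y\<in>ball x0 e2. p x0 / 2 < p y \<and> p y < 3/2 * p x0"
    using near_ball[OF p_cont px0] by blast
  obtain e3 where e3: "e3 > 0" "lam \<noteq> 0 \<Longrightarrow> \<forall>y\<in>ball x0 e3. qi x0 / 2 < qi y \<and> qi y < 3/2 * qi x0"
  proof (cases "lam = 0")
    case True then show ?thesis using that[of 1] by simp
  next
    case False then show ?thesis using that near_ball[OF qi_cont qix0] by blast
  qed
  obtain e4 where e4: "e4 > 0" "\<forall>y\<in>ball x0 e4. \<bar>q y - q x0\<bar> < \<kappa> * r x0 / 2"
    using cont_ball[OF qc, of "\<kappa> * r x0 / 2" x0] kp x0 by auto
  define e where "e = min (min e1 e2) (min e3 e4)"
  have e: "e > 0" using e1 e2 e3 e4 by (simp add: e_def)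
  have eb: "y \<in> ball x0 e \<Longrightarrow> y \<in> ball x0 e1 \<and> y \<in> ball x0 e2 \<and> y \<in> ball x0 e3 \<and> y \<in> ball x0 e4" for y
    by (auto simp: e_def)
  have qz: "q y = 0" if yb: "y \<in> ball x0 e" for y
  proof (rule ccontr)
    assume "q y \<noteq> 0"
    then have qy: "0 < q y" using q0[of y] by simp
    have ry: "r x0 / 2 < r y" using e1 eb[OF yb] by blast
    then have ry0: "0 < r y" using x0 by simp
    have "ln (q y / r y) = A q" by (rule const_U[OF qD min qy ry0])
    moreover have "exp (ln (q y / r y)) = q y / r y" using qy ry0 by simp
    ultimately have "q y / r y = \<kappa>" by (simp add: \<kappa>_def)
    then have "q y = \<kappa> * r y" using ry0 by (simp add: field_simps)
    moreover have "q y < \<kappa> * r x0 / 2"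
    proof -
      have "y \<in> ball x0 e4" using eb[OF yb] by blast
      then have "\<bar>q y - q x0\<bar> < \<kappa> * r x0 / 2" using e4(2) by blast
      then show ?thesis using qx0 qy by simp
    qed
    moreover have "\<kappa> * (r x0 / 2) < \<kappa> * r y" using ry kp by simp
    ultimately show False by simp
  qed
  define \<rho> where "\<rho> = e / 2"
  have \<rho>: "0 < \<rho>" "\<rho> < e" using e by (auto simp: \<rho>_def)
  have cb: "cball x0 \<rho> \<subseteq> ball x0 e" using \<rho> by auto
  define ch where "ch = bump x0 \<rho>"
  have chm[measurable]: "ch \<in> borel_measurable lborel" unfolding ch_def using bump_cont cont_meas by blast
  have ch0: "\<And>y. 0 \<le> ch y" and ch1: "\<And>y. ch y \<le> 1" unfolding ch_def by (auto simp: bump_nonneg bump_le1)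
  have chpos: "0 < ch y \<longleftrightarrow> y \<in> ball x0 \<rho>" for y unfolding ch_def by (rule bump_pos[OF \<rho>(1)])
  have ich: "integrable lborel ch"
  proof (rule integrable_bounded_cball[where B=1 and ?x0.0=x0 and \<rho>=\<rho>])
    show "ch \<in> borel_measurable lborel" by (rule chm)
    fix y show "\<bar>ch y\<bar> \<le> 1 * indicator (cball x0 \<rho>) y"
    proof (cases "y \<in> ball x0 \<rho>")
      case True then show ?thesis using ch0[of y] ch1[of y] by auto
    next
      case False then have "ch y = 0" using chpos[of y] ch0[of y] by simp
      then show ?thesis by simp
    qed
  qed
  define N where "N = integral\<^sup>L lborel ch"
  have Np: "0 < N" unfolding N_def by (rule integral_pos_ball[OF ich ch0 \<rho>(1)]) (use chpos in auto)
  define g where "g = (\<lambda>y. ch y / N)"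
  have gm[measurable]: "g \<in> borel_measurable lborel" unfolding g_def by measurable
  have g0: "\<And>y. 0 \<le> g y" using ch0 Np by (simp add: g_def)
  have gG: "\<And>y. g y \<le> 1 / N" using ch1 Np by (simp add: g_def divide_right_mono)
  have gpos: "0 < g y \<longleftrightarrow> y \<in> ball x0 \<rho>" for y
  proof -
    have "0 < g y \<longleftrightarrow> 0 < ch y" using Np by (simp add: g_def zero_less_divide_iff)
    then show ?thesis using chpos[of y] by simp
  qed
  have gb: "\<And>y. 0 < g y \<Longrightarrow> y \<in> ball x0 \<rho>" using gpos by blast
  have inb: "y \<in> ball x0 \<rho> \<Longrightarrow> y \<in> ball x0 e" for y using \<rho> by auto
  have ig: "integrable lborel g" unfolding g_def using ich by simp
  have Ig: "integral\<^sup>L lborel g = 1" unfolding g_def using Np by (simp add: N_def)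
  have gD: "g \<in> Dm"
  proof -
    have "smooth g"
    proof -
      have "smooth ch" unfolding ch_def by (rule bump_smooth)
      then have "\<forall>k. Ck k (\<lambda>y. (1/N) * ch y)" unfolding smooth_def
        using Ck_cmult[of _ ch "1/N"] by blast
      moreover have "(\<lambda>y. (1/N) * ch y) = g" by (simp add: g_def fun_eq_iff)
      ultimately show ?thesis unfolding smooth_def by simp
    qed
    moreover have "KL_finite g p"
      by (rule KL_finite_loc[OF gm meas(1) g0 gG gb, of "p x0 / 2" "3/2 * p x0"])
         (use e2 eb inb px0 in \<open>auto simp: less_imp_le\<close>)
    moreover have "lam \<noteq> 0 \<longrightarrow> KL_finite g qi"
    proof
      assume l: "lam \<noteq> 0"
      show "KL_finite g qi"
        by (rule KL_finite_loc[OF gm meas(2) g0 gG gb, of "qi x0 / 2" "3/2 * qi x0"])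
           (use e3(2)[OF l] eb inb qix0[OF l] in \<open>auto simp: less_imp_le\<close>)
    qed
    moreover have "eta \<noteq> 0 \<longrightarrow> entropy_finite g"
    proof
      have "KL_finite g (\<lambda>_. 1)"
        by (rule KL_finite_loc[where s="\<lambda>_. 1" and a=1 and b=1, OF gm _ g0 gG gb]) auto
      then show "entropy_finite g" by (simp add: KL_finite_def entropy_finite_def)
    qed
    ultimately show ?thesis
      using g0 ig Ig unfolding Dm_def lagr_domain_def smooth_densities_def by auto
  qed
  have dis: "0 < g y \<Longrightarrow> q y = 0" for y using gb inb qz by blast
  have rpos_b: "0 < g y \<Longrightarrow> 0 < r y" for y
  proof -
    assume "0 < g y"
    then have "y \<in> ball x0 e" using gb inb by blast
    then have "r x0 / 2 < r y" using e1 eb by blast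
    then show "0 < r y" using x0 by simp
  qed
  define t where "t = min (1/2) (exp (A q - A g - 1))"
  have t: "0 < t" "t < 1" "t \<le> 1/2" unfolding t_def by auto
  have lnt: "ln t \<le> A q - A g - 1"
  proof -
    have "t \<le> exp (A q - A g - 1)" unfolding t_def by simp
    then have "ln t \<le> ln (exp (A q - A g - 1))" using t(1) by (subst ln_le_cancel_iff) auto
    then show ?thesis by simp
  qed
  define qm where "qm = (\<lambda>y. (1-t) * q y + t * g y)"
  have qmm[measurable]: "qm \<in> borel_measurable lborel" unfolding qm_def by measurable
  have iqm: "integrable lborel qm" unfolding qm_def using Dm_D(3)[OF qD] ig by simp
  have Iqm: "integral\<^sup>L lborel qm = 1" unfolding qm_def using Dm_D(3,4)[OF qD] ig Ig by simp
  have qmD: "qm \<in> Dm"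
  proof -
    have "smooth qm"
    proof -
      have "smooth q" using Dm_D(5)[OF qD] .
      moreover have "smooth g" using gD by (simp add: Dm_def lagr_domain_def smooth_densities_def)
      ultimately have "\<forall>k. Ck k qm" unfolding smooth_def qm_def
        using Ck_add[OF Ck_cmult Ck_cmult] by blast
      then show ?thesis by (simp add: smooth_def)
    qed
    moreover have "\<forall>y. 0 \<le> qm y" using q0 g0 t by (simp add: qm_def)
    moreover have "KL_finite qm p"
      unfolding qm_def
      by (rule mix_KL(1)[OF qm gm meas(1) Dm_D(6)[OF qD] _ q0 g0 _ Dm_D(3)[OF qD] ig t(1,2)])
         (use gD Dm_D(6) dis rpos_b r_pos_D in auto)
    moreover have "lam \<noteq> 0 \<longrightarrow> KL_finite qm qi"
    proof
      assume l: "lam \<noteq> 0"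
      show "KL_finite qm qi"
        unfolding qm_def
        by (rule mix_KL(1)[OF qm gm meas(2) Dm_D(7)[OF qD l] _ q0 g0 _ Dm_D(3)[OF qD] ig t(1,2)])
           (use gD Dm_D(7) l dis rpos_b r_pos_D in auto)
    qed
    moreover have "eta \<noteq> 0 \<longrightarrow> entropy_finite qm"
    proof
      assume l: "eta \<noteq> 0"
      have "KL_finite q (\<lambda>_. 1)" using Dm_D(8)[OF qD l] by (simp add: KL_finite_def entropy_finite_def)
      moreover have "KL_finite g (\<lambda>_. 1)" using Dm_D(8)[OF gD l] by (simp add: KL_finite_def entropy_finite_def)
      ultimately have "KL_finite qm (\<lambda>_. 1)"
        unfolding qm_def
        by (intro mix_KL(1)[OF qm gm _ _ _ q0 g0 _ Dm_D(3)[OF qD] ig t(1,2)]) (use dis in auto)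
      then show "entropy_finite qm" by (simp add: KL_finite_def entropy_finite_def)
    qed
    ultimately show ?thesis
      using iqm Iqm unfolding Dm_def lagr_domain_def smooth_densities_def by auto
  qed
  have KLqr: "KL_finite q r" using Dm_AE[OF qD] ID(1)[OF qD] by (simp add: KL_finite_def)
  have KLgr: "KL_finite g r" using Dm_AE[OF gD] ID(1)[OF gD] by (simp add: KL_finite_def)
  have "A qm = (1-t) * A q + ((1-t) * ln (1-t)) * 1 + t * A g + (t * ln t) * 1"
    unfolding A_def qm_def
    using mix_KL(2)[OF qm gm meas(4) KLqr KLgr q0 g0 _ Dm_D(3)[OF qD] ig t(1,2)] dis rpos_b
      Dm_D(4)[OF qD] Ig by simp
  moreover have "(1-t) * ln (1-t) \<le> 0"
    using t by (intro mult_nonneg_nonpos) auto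
  moreover have "t * ln t \<le> t * (A q - A g - 1)" using lnt t by (intro mult_left_mono) auto
  ultimately have "A qm \<le> A q - t" by (simp add: algebra_simps)
  moreover have "A q \<le> A qm" using min qmD by blast
  ultimately show False using t by simp
qed

end

context ctx begin

lemma part1:
  assumes qD: "q \<in> Dm" and min: "\<forall>q'\<in>Dm. A q \<le> A q'"
  shows "q x = r x / Zn"
proof -
  define \<kappa> where "\<kappa> = exp (A q)"
  have kp: "0 < \<kappa>" by (simp add: \<kappa>_def)
  note qc = Dm_D(1)[OF qD]
  have q0: "\<And>y. 0 \<le> q y" using Dm_D(2)[OF qD] .
  have c1: "q y = \<kappa> * r y" if ry: "0 < r y" for y
  proof -
    have qy: "0 < q y" by (rule supp[OF qD min ry])
    have "ln (q y / r y) = A q" by (rule const_U[OF qD min qy ry])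
    moreover have "exp (ln (q y / r y)) = q y / r y" using qy ry by simp
    ultimately have "q y / r y = \<kappa>" by (simp add: \<kappa>_def)
    then show ?thesis using ry by (simp add: field_simps)
  qed
  have c2: "q y = \<kappa> * r y" for y
  proof (cases "0 < r y")
    case True then show ?thesis by (rule c1)
  next
    case False
    then have ry: "r y = 0" using r_nonneg[of y] by simp
    show ?thesis
    proof (rule ccontr)
      assume "q y \<noteq> \<kappa> * r y"
      then have qy: "0 < q y" using ry q0[of y] by simp
      obtain e1 where e1: "e1 > 0" "\<forall>z\<in>ball y e1. q y / 2 < q z" using pos_ball[OF qc qy] by blast
      obtain e2 where e2: "e2 > 0" "\<forall>z\<in>ball y e2. \<bar>r z - r y\<bar> < q y / (2 * \<kappa>)"
        using cont_ball[OF r_cont, of "q y / (2 * \<kappa>)" y] qy kp by auto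
      define e where "e = min e1 e2"
      have e: "0 < e" using e1 e2 by (simp add: e_def)
      have bad: "0 < q z \<and> \<not> 0 < r z" if zb: "z \<in> ball y e" for z
      proof -
        have "z \<in> ball y e1" "z \<in> ball y e2" using zb by (auto simp: e_def)
        then have a: "q y / 2 < q z" and b: "\<bar>r z - r y\<bar> < q y / (2 * \<kappa>)" using e1 e2 by auto
        have "0 < q z" using a qy by simp
        moreover have "\<not> 0 < r z"
        proof
          assume rz: "0 < r z"
          have "r z < q y / (2 * \<kappa>)" using b ry rz by simp
          then have "\<kappa> * r z < \<kappa> * (q y / (2 * \<kappa>))" by (rule mult_strict_left_mono[OF _ kp])
          also have "\<dots> = q y / 2" using kp by simp
          finally show False using c1[OF rz] a by simp
        qed
        ultimately show ?thesis by blast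
      qed
      have "AE z in lborel. z \<notin> ball y e"
        using Dm_AE[OF qD] by eventually_elim (use bad in blast)
      then show False using not_AE_ball[OF e] by blast
    qed
  qed
  have ir: "integrable lborel r"
  proof -
    have "integrable lborel (\<lambda>y. (1/\<kappa>) * q y)" using Dm_D(3)[OF qD] by simp
    moreover have "(\<lambda>y. (1/\<kappa>) * q y) = r" using c2 kp by (simp add: fun_eq_iff)
    ultimately show ?thesis by simp
  qed
  have "1 = integral\<^sup>L lborel q" using Dm_D(4)[OF qD] by simp
  also have "\<dots> = (\<integral>y. \<kappa> * r y \<partial>lborel)"
    by (rule Bochner_Integration.integral_cong) (simp_all add: c2)
  also have "\<dots> = \<kappa> * Zn" by (simp add: Zn_def)
  finally have "Zn = 1 / \<kappa>" using kp by (simp add: field_simps)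
  then show ?thesis using c2[of x] kp by simp
qed

end

theorem proposition3:
  fixes pt :: "'a::euclidean_space \<Rightarrow> real" and qi :: "'a \<Rightarrow> real"
    and eps_tr eps_ent lam eta :: real
  defines "Z \<equiv> integral\<^sup>L lborel pt"
  defines "p \<equiv> (\<lambda>x. pt x / Z)"
  defines "c \<equiv> 1 + lam + eta"
  defines "Zn \<equiv> (\<integral>x. pw (qi x) (lam / c) * pw (pt x) (1 / c) \<partial>lborel)"
  defines "qn \<equiv> (\<lambda>x. pw (qi x) (lam / c) * pw (pt x) (1 / c) / Zn)"
  assumes pt_cont: "continuous_on UNIV pt"
    and pt_nonneg: "\<forall>x. 0 \<le> pt x"
    and pt_int: "integrable lborel pt"
    and Z_pos: "0 < Z"
    and p_dens: "p \<in> smooth_densities"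
    and eps: "0 < eps_tr" "0 < eps_ent"
    and qi_dens: "qi \<in> smooth_densities"
    and mult: "0 \<le> lam" "0 \<le> eta"
    and Zn_int: "integrable lborel (\<lambda>x. pw (qi x) (lam / c) * pw (pt x) (1 / c))"
  shows "(\<forall>q \<in> lagr_domain p qi lam eta.
            (\<forall>q' \<in> lagr_domain p qi lam eta.
               lagrangian p qi eps_tr eps_ent lam eta q \<le> lagrangian p qi eps_tr eps_ent lam eta q')
            \<longrightarrow> (\<forall>x. q x = qn x))
       \<and> (qn \<in> lagr_domain p qi lam eta \<longrightarrow>
            (\<forall>q' \<in> lagr_domain p qi lam eta.
               lagrangian p qi eps_tr eps_ent lam eta qn \<le> lagrangian p qi eps_tr eps_ent lam eta q'))"
proof -
  interpret C: ctx pt qi p "\<lambda>x. pw (qi x) (lam / c) * pw (pt x) (1 / c)" Z lam eta c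
    by unfold_locales (use Z_pos p_dens qi_dens mult in \<open>auto simp: p_def c_def\<close>)
  have Zn_eq: "Zn = C.Zn" by (simp add: Zn_def C.Zn_def)
  have qn_eq: "qn = (\<lambda>x. pw (qi x) (lam / c) * pw (pt x) (1 / c) / C.Zn)"
    by (simp add: qn_def Zn_eq)
  have Dm_eq: "lagr_domain p qi lam eta = C.Dm" by (simp add: C.Dm_def)
  have L: "lagrangian p qi eps_tr eps_ent lam eta q =
       c * C.A q + (ln Z - lam * eps_tr + eta * (entropy qi - eps_ent))" if "q \<in> C.Dm" for q
    by (rule C.ID(2)[OF that])
  show ?thesis
  proof
    show "\<forall>q\<in>lagr_domain p qi lam eta.
       (\<forall>q'\<in>lagr_domain p qi lam eta.
           lagrangian p qi eps_tr eps_ent lam eta q \<le> lagrangian p qi eps_tr eps_ent lam eta q') \<longrightarrow>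
       (\<forall>x. q x = qn x)"
    proof (intro ballI impI allI)
      fix q x
      assume qD: "q \<in> lagr_domain p qi lam eta"
        and mn: "\<forall>q'\<in>lagr_domain p qi lam eta.
           lagrangian p qi eps_tr eps_ent lam eta q \<le> lagrangian p qi eps_tr eps_ent lam eta q'"
      have qD': "q \<in> C.Dm" using qD Dm_eq by simp
      have "\<forall>q'\<in>C.Dm. C.A q \<le> C.A q'"
      proof
        fix q' assume q'D: "q' \<in> C.Dm"
        have "c * C.A q \<le> c * C.A q'" using mn q'D L[OF qD'] L[OF q'D] Dm_eq by auto
        then show "C.A q \<le> C.A q'" using C.c_pos by simp
      qed
      then show "q x = qn x" using C.part1[OF qD'] qn_eq by simp
    qed
  next
    show "qn \<in> lagr_domain p qi lam eta \<longrightarrow>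
    (\<forall>q'\<in>lagr_domain p qi lam eta.
        lagrangian p qi eps_tr eps_ent lam eta qn \<le> lagrangian p qi eps_tr eps_ent lam eta q')"
    proof (intro impI ballI)
      fix q'
      assume qnD: "qn \<in> lagr_domain p qi lam eta" and q'D: "q' \<in> lagr_domain p qi lam eta"
      have qnD': "(\<lambda>x. pw (qi x) (lam / c) * pw (pt x) (1 / c) / C.Zn) \<in> C.Dm" using qnD Dm_eq qn_eq by simp
      have q'D': "q' \<in> C.Dm" using q'D Dm_eq by simp
      have "C.A qn \<le> C.A q'" using C.part2[OF qnD' q'D'] qn_eq by simp
      then have "c * C.A qn \<le> c * C.A q'" using C.c_pos by simp
      then show "lagrangian p qi eps_tr eps_ent lam eta qn \<le> lagrangian p qi eps_tr eps_ent lam eta q'"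
        using L[OF q'D'] L qnD' qn_eq by simp
    qed
  qed
qed

end
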